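(* The independence polynomial $Ind(G;x)$ and the clique polynomial $Cl(G;x)$ are both weakly distinguishing; i.e. almost all graphs $G$ have an $Ind$-mate and almost all graphs $G$ have a $Cl$-mate.
   Context: All graphs are finite and simple. For a graph $G$ and $i\ge 1$, let $c_i(G)$ be the number of vertex subsets $A\subseteq V(G)$ with $G[A]$ isomorphic to the complete graph $K_i$, and $s_i(G)$ the number of $A\subseteq V(G)$ with $G[A]$ edgeless on $i$ vertices. Then $Cl(G;x)=1+\sum_{i\ge1} c_i(G)x^i$ and $Ind(G;x)=1+\sum_{i\ge 1}s_i(G)x^i$. For a graph polynomial $P$ (an isomorphism-invariant map from graphs to polynomials), $H$ is a $P$-mate of $G$ if $P(G)=P(H)$ and $H\not\cong G$; $G$ is $P$-unique if it has no $P$-mate. Let $\mathcal{G}(n)$ be the set of isomorphism classes of graphs on $n$ vertices and $U_P(n)$ the set of $P$-unique graphs in $\mathcal{G}(n)$. $P$ is weakly distinguishing if $\lim_{n\to\infty}|U_P(n)|/|\mathcal{G}(n)|=0$. *)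

theory Defs
  imports Complex_Main "HOL-Computational_Algebra.Polynomial"
begin

text \<open>A finite simple graph on vertex set {0..<n} is given by its edge set:
  a set of 2-element subsets of {0..<n}. Every finite simple graph is isomorphic
  to such a graph.\<close>

definition graphs :: "nat \<Rightarrow> nat set set set" where
  "graphs n = {E. E \<subseteq> {e. e \<subseteq> {0..<n} \<and> card e = 2}}"

definition graph_iso :: "nat \<Rightarrow> nat set set \<Rightarrow> nat \<Rightarrow> nat set set \<Rightarrow> bool" where
  "graph_iso n E m F \<longleftrightarrow> (\<exists>f. bij_betw f {0..<n} {0..<m} \<and>
      (\<forall>x\<in>{0..<n}. \<forall>y\<in>{0..<n}. {x, y} \<in> E \<longleftrightarrow> {f x, f y} \<in> F))"

definition iso_classes :: "nat \<Rightarrow> nat set set set set" where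
  "iso_classes n = graphs n // {(E, F). E \<in> graphs n \<and> F \<in> graphs n \<and> graph_iso n E n F}"

definition is_clique :: "nat set set \<Rightarrow> nat set \<Rightarrow> bool" where
  "is_clique E A \<longleftrightarrow> (\<forall>x\<in>A. \<forall>y\<in>A. x \<noteq> y \<longrightarrow> {x, y} \<in> E)"

definition is_indep :: "nat set set \<Rightarrow> nat set \<Rightarrow> bool" where
  "is_indep E A \<longleftrightarrow> (\<forall>x\<in>A. \<forall>y\<in>A. {x, y} \<notin> E)"

definition clique_count :: "nat \<Rightarrow> nat set set \<Rightarrow> nat \<Rightarrow> nat" where
  "clique_count n E i = card {A. A \<subseteq> {0..<n} \<and> card A = i \<and> is_clique E A}"

definition indep_count :: "nat \<Rightarrow> nat set set \<Rightarrow> nat \<Rightarrow> nat" where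
  "indep_count n E i = card {A. A \<subseteq> {0..<n} \<and> card A = i \<and> is_indep E A}"

text \<open>Cl(G;x) = 1 + sum_{i>=1} c_i x^i and Ind(G;x) = 1 + sum_{i>=1} s_i x^i
  (c_i, s_i vanish for i > n).\<close>
definition clique_poly :: "nat \<Rightarrow> nat set set \<Rightarrow> int poly" where
  "clique_poly n E = 1 + (\<Sum>i\<in>{1..n}. monom (int (clique_count n E i)) i)"

definition ind_poly :: "nat \<Rightarrow> nat set set \<Rightarrow> int poly" where
  "ind_poly n E = 1 + (\<Sum>i\<in>{1..n}. monom (int (indep_count n E i)) i)"

definition P_unique :: "(nat \<Rightarrow> nat set set \<Rightarrow> int poly) \<Rightarrow> nat \<Rightarrow> nat set set \<Rightarrow> bool" where
  "P_unique P n E \<longleftrightarrow> (\<forall>m F. F \<in> graphs m \<and> P m F = P n E \<longrightarrow> graph_iso n E m F)"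

definition unique_classes :: "(nat \<Rightarrow> nat set set \<Rightarrow> int poly) \<Rightarrow> nat \<Rightarrow> nat set set set set" where
  "unique_classes P n = {C \<in> iso_classes n. \<forall>E\<in>C. P_unique P n E}"

definition weakly_distinguishing :: "(nat \<Rightarrow> nat set set \<Rightarrow> int poly) \<Rightarrow> bool" where
  "weakly_distinguishing P \<longleftrightarrow>
     (\<lambda>n. real (card (unique_classes P n)) / real (card (iso_classes n))) \<longlonglongrightarrow> 0"

end

theory Submission imports Defs "HOL-Combinatorics.Permutations" "HOL-Real_Asymp.Real_Asymp" begin

definition pairs :: "nat set \<Rightarrow> nat set set" where
  "pairs A = {e. e \<subseteq> A \<and> card e = 2}"

lemma graphs_eq: "graphs n = Pow (pairs {0..<n})"
  by (auto simp: graphs_def pairs_def)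

lemma pairs_subset: "pairs A \<subseteq> Pow A" by (auto simp: pairs_def)

lemma finite_pairs: "finite A \<Longrightarrow> finite (pairs A)"
  using pairs_subset by (meson finite_Pow_iff rev_finite_subset)

lemma card_pairs: "finite A \<Longrightarrow> card (pairs A) = card A choose 2"
  unfolding pairs_def by (rule n_subsets)

lemma finite_graphs: "finite (graphs n)"
  by (simp add: graphs_eq finite_pairs)

lemma card_graphs: "card (graphs n) = 2 ^ (n choose 2)"
  by (simp add: graphs_eq card_Pow finite_pairs card_pairs)

definition isoR :: "nat \<Rightarrow> (nat set set \<times> nat set set) set" where
  "isoR n = {(E, F). E \<in> graphs n \<and> F \<in> graphs n \<and> graph_iso n E n F}"

lemma iso_classes_eq: "iso_classes n = graphs n // isoR n"
  by (simp add: iso_classes_def isoR_def)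

lemma graph_iso_refl: "graph_iso n E n E"
  unfolding graph_iso_def by (rule exI[of _ id]) auto

lemma graph_iso_sym: assumes "graph_iso n E n F" shows "graph_iso n F n E"
proof -
  obtain f where f: "bij_betw f {0..<n} {0..<n}"
    and h: "\<forall>x\<in>{0..<n}. \<forall>y\<in>{0..<n}. {x, y} \<in> E \<longleftrightarrow> {f x, f y} \<in> F"
    using assms unfolding graph_iso_def by blast
  define g where "g = inv_into {0..<n} f"
  have g: "bij_betw g {0..<n} {0..<n}" using f g_def bij_betw_inv_into by blast
  have fg: "\<And>x. x \<in> {0..<n} \<Longrightarrow> f (g x) = x" using f g_def
    by (meson bij_betw_inv_into_right)
  have gin: "\<And>x. x \<in> {0..<n} \<Longrightarrow> g x \<in> {0..<n}" using g bij_betwE by blast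
  show ?thesis unfolding graph_iso_def
  proof (rule exI[of _ g], intro conjI g ballI)
    fix x y assume x: "x \<in> {0..<n}" and y: "y \<in> {0..<n}"
    have "{g x, g y} \<in> E \<longleftrightarrow> {f (g x), f (g y)} \<in> F" using h gin x y by blast
    then show "{x, y} \<in> F \<longleftrightarrow> {g x, g y} \<in> E" using fg x y by simp
  qed
qed

lemma graph_iso_trans: assumes "graph_iso n E n F" "graph_iso n F n G" shows "graph_iso n E n G"
proof -
  obtain f where f: "bij_betw f {0..<n} {0..<n}"
    and h: "\<forall>x\<in>{0..<n}. \<forall>y\<in>{0..<n}. {x, y} \<in> E \<longleftrightarrow> {f x, f y} \<in> F"
    using assms(1) unfolding graph_iso_def by blast
  obtain g where g: "bij_betw g {0..<n} {0..<n}"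
    and h2: "\<forall>x\<in>{0..<n}. \<forall>y\<in>{0..<n}. {x, y} \<in> F \<longleftrightarrow> {g x, g y} \<in> G"
    using assms(2) unfolding graph_iso_def by blast
  have fin: "\<And>x. x \<in> {0..<n} \<Longrightarrow> f x \<in> {0..<n}" using f bij_betwE by blast
  show ?thesis unfolding graph_iso_def
  proof (rule exI[of _ "g \<circ> f"], intro conjI ballI)
    show "bij_betw (g \<circ> f) {0..<n} {0..<n}" using f g bij_betw_trans by blast
    fix x y assume x: "x \<in> {0..<n}" and y: "y \<in> {0..<n}"
    show "{x, y} \<in> E \<longleftrightarrow> {(g \<circ> f) x, (g \<circ> f) y} \<in> G"
      using h h2 fin x y by simp
  qed
qed

lemma equiv_isoR: "equiv (graphs n) (isoR n)"
  unfolding equiv_def refl_on_def sym_def trans_def isoR_def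
  using graph_iso_refl graph_iso_sym graph_iso_trans by blast

lemma class_subset:
  assumes E: "E \<in> graphs n"
  shows "isoR n `` {E} \<subseteq> (\<lambda>p. (\<lambda>e. p ` e) ` E) ` {p. p permutes {0..<n}}"
proof
  fix F assume "F \<in> isoR n `` {E}"
  then have F: "F \<in> graphs n" and iso: "graph_iso n E n F" by (auto simp: isoR_def)
  obtain f where f: "bij_betw f {0..<n} {0..<n}"
    and h: "\<forall>x\<in>{0..<n}. \<forall>y\<in>{0..<n}. {x, y} \<in> E \<longleftrightarrow> {f x, f y} \<in> F"
    using iso unfolding graph_iso_def by blast
  define p where "p x = (if x < n then f x else x)" for x
  have pf: "\<And>x. x \<in> {0..<n} \<Longrightarrow> p x = f x" by (simp add: p_def)
  have "bij_betw p {0..<n} {0..<n}" using f pf bij_betw_cong by blast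
  then have pp: "p permutes {0..<n}" by (rule bij_imp_permutes) (simp add: p_def)
  have "F = (\<lambda>e. p ` e) ` E"
  proof
    show "F \<subseteq> (\<lambda>e. p ` e) ` E"
    proof
      fix e assume e: "e \<in> F"
      then have "e \<subseteq> {0..<n}" "card e = 2" using F by (auto simp: graphs_def)
      then obtain a b where ab: "e = {a, b}" "a \<in> {0..<n}" "b \<in> {0..<n}"
        by (auto simp: card_2_iff)
      obtain x where x: "x \<in> {0..<n}" "f x = a" using f ab bij_betw_iff_bijections by metis
      obtain y where y: "y \<in> {0..<n}" "f y = b" using f ab bij_betw_iff_bijections by metis
      have "{x, y} \<in> E" using h x y e ab by auto
      moreover have "p ` {x, y} = e" using x y ab pf by auto
      ultimately show "e \<in> (\<lambda>e. p ` e) ` E"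
        by (intro image_eqI[of e "\<lambda>e. p ` e" "{x, y}"]) auto
    qed
  next
    show "(\<lambda>e. p ` e) ` E \<subseteq> F"
    proof
      fix e' assume "e' \<in> (\<lambda>e. p ` e) ` E"
      then obtain e where e: "e \<in> E" "e' = p ` e" by blast
      then have "e \<subseteq> {0..<n}" "card e = 2" using E by (auto simp: graphs_def)
      then obtain x y where xy: "e = {x, y}" "x \<in> {0..<n}" "y \<in> {0..<n}"
        by (auto simp: card_2_iff)
      have "{f x, f y} \<in> F" using h xy e by auto
      then show "e' \<in> F" using e xy pf by auto
    qed
  qed
  then show "F \<in> (\<lambda>p. (\<lambda>e. p ` e) ` E) ` {p. p permutes {0..<n}}" using pp by blast
qed

lemma card_class_le:
  assumes "C \<in> iso_classes n" shows "card C \<le> fact n"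
proof -
  obtain E where E: "E \<in> graphs n" "C = isoR n `` {E}"
    using assms by (auto simp: iso_classes_eq elim: quotientE)
  have "card C \<le> card ((\<lambda>p. (\<lambda>e. p ` e) ` E) ` {p. p permutes {0..<n}})"
    using class_subset[OF E(1)] E(2) by (intro card_mono) (auto intro: finite_permutations)
  also have "\<dots> \<le> card {p. p permutes {0..<n}}"
    by (rule card_image_le) (auto intro: finite_permutations)
  also have "\<dots> = fact n" by (rule card_permutations) auto
  finally show ?thesis .
qed

lemma finite_iso_classes: "finite (iso_classes n)"
  unfolding iso_classes_eq by (rule finite_quotient) (auto simp: finite_graphs isoR_def)

lemma card_graphs_le: "2 ^ (n choose 2) \<le> card (iso_classes n) * fact n"
proof -
  have "2 ^ (n choose 2) = card (\<Union> (iso_classes n))"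
    using Union_quotient[OF equiv_isoR[of n]] by (simp add: iso_classes_eq card_graphs)
  also have "\<dots> \<le> sum card (iso_classes n)" by (rule card_Union_le_sum_card)
  also have "\<dots> \<le> card (iso_classes n) * fact n"
    using sum_bounded_above[of "iso_classes n" card "fact n"] card_class_le by auto
  finally show ?thesis .
qed


definition cnt :: "(nat set set \<Rightarrow> nat set \<Rightarrow> bool) \<Rightarrow> nat \<Rightarrow> nat set set \<Rightarrow> nat \<Rightarrow> nat" where
  "cnt Q n E i = card {A. A \<subseteq> {0..<n} \<and> card A = i \<and> Q E A}"

definition bad :: "(nat set set \<Rightarrow> nat set \<Rightarrow> bool) \<Rightarrow> nat \<Rightarrow> nat \<Rightarrow> nat set set set" where
  "bad Q n j = {E \<in> graphs n. \<exists>A. A \<subseteq> {0..<n} \<and> card A = j \<and> Q E A}"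

definition rep :: "nat set set set \<Rightarrow> nat set set" where
  "rep C = (SOME E. E \<in> C)"

lemma rep_in:
  assumes "C \<in> iso_classes n" shows "rep C \<in> C" "rep C \<in> graphs n"
proof -
  obtain E where E: "E \<in> graphs n" "C = isoR n `` {E}"
    using assms by (auto simp: iso_classes_eq elim: quotientE)
  then have "E \<in> C" by (auto simp: isoR_def graph_iso_refl)
  then show "rep C \<in> C" unfolding rep_def by (rule someI)
  then show "rep C \<in> graphs n" using E by (auto simp: isoR_def)
qed

lemma cnt_le: "cnt Q n E i \<le> 2 ^ n"
proof -
  have "cnt Q n E i \<le> card (Pow {0..<n})"
    unfolding cnt_def by (rule card_mono) auto
  then show ?thesis by (simp add: card_Pow)
qed

lemma unique_bound:
  fixes P :: "nat \<Rightarrow> nat set set \<Rightarrow> int poly"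
  assumes Pdef: "\<And>n E. P n E = 1 + (\<Sum>i\<in>{1..n}. monom (int (cnt Q n E i)) i)"
    and her: "\<And>E A B. Q E A \<Longrightarrow> B \<subseteq> A \<Longrightarrow> Q E B"
  shows "card (unique_classes P n) \<le> (2 ^ n + 1) ^ k + card (bad Q n (k + 1))"
proof -
  define S1 where "S1 = {C \<in> unique_classes P n. rep C \<notin> bad Q n (k + 1)}"
  define S2 where "S2 = {C \<in> iso_classes n. rep C \<in> bad Q n (k + 1)}"
  have fin: "finite (iso_classes n)" by (rule finite_iso_classes)
  have sub: "unique_classes P n \<subseteq> S1 \<union> S2"
    unfolding S1_def S2_def unique_classes_def by auto
  have fS1: "finite S1" using fin unfolding S1_def unique_classes_def by auto
  have fS2: "finite S2" using fin unfolding S2_def by auto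
  have "card S2 \<le> card (bad Q n (k + 1))"
  proof (rule card_inj_on_le)
    show "inj_on rep S2"
    proof
      fix C1 C2 assume C1: "C1 \<in> S2" and C2: "C2 \<in> S2" and eq: "rep C1 = rep C2"
      have "C1 \<in> graphs n // isoR n" "C2 \<in> graphs n // isoR n"
        using C1 C2 by (auto simp: S2_def iso_classes_eq)
      moreover have "rep C1 \<in> C1 \<inter> C2" using rep_in(1)[of C1 n] rep_in(1)[of C2 n] C1 C2 eq by (auto simp: S2_def)
      ultimately show "C1 = C2" using quotient_disj[OF equiv_isoR] by blast
    qed
    show "rep ` S2 \<subseteq> bad Q n (k + 1)" by (auto simp: S2_def)
    show "finite (bad Q n (k + 1))" using finite_graphs by (simp add: bad_def)
  qed
  moreover have "card S1 \<le> (2 ^ n + 1) ^ k"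
  proof -
    define h where "h C = restrict (\<lambda>i. cnt Q n (rep C) i) {1..k}" for C
    have "card S1 \<le> card (PiE {1..k} (\<lambda>_. {0..(2::nat) ^ n}))"
    proof (rule card_inj_on_le)
      show "h ` S1 \<subseteq> PiE {1..k} (\<lambda>_. {0..(2::nat) ^ n})"
        using cnt_le by (auto simp: h_def)
      show "finite (PiE {1..k} (\<lambda>_. {0..(2::nat) ^ n}))" by (intro finite_PiE) auto
      show "inj_on h S1"
      proof
        fix C1 C2 assume C1: "C1 \<in> S1" and C2: "C2 \<in> S1" and eq: "h C1 = h C2"
        have C1i: "C1 \<in> iso_classes n" and C2i: "C2 \<in> iso_classes n"
          using C1 C2 by (auto simp: S1_def unique_classes_def)
        define E1 where "E1 = rep C1"
        define E2 where "E2 = rep C2"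
        have E1: "E1 \<in> C1" "E1 \<in> graphs n" "E1 \<notin> bad Q n (k + 1)"
          using rep_in[OF C1i] C1 by (auto simp: E1_def S1_def)
        have E2: "E2 \<in> C2" "E2 \<in> graphs n" "E2 \<notin> bad Q n (k + 1)"
          using rep_in[OF C2i] C2 by (auto simp: E2_def S1_def)
        have zero: "cnt Q n E i = 0" if "E \<in> graphs n" "E \<notin> bad Q n (k + 1)" "k < i" for E i
        proof -
          have "{A. A \<subseteq> {0..<n} \<and> card A = i \<and> Q E A} = {}"
          proof (rule ccontr)
            assume "{A. A \<subseteq> {0..<n} \<and> card A = i \<and> Q E A} \<noteq> {}"
            then obtain A where A: "A \<subseteq> {0..<n}" "card A = i" "Q E A" by blast
            then obtain T where T: "T \<subseteq> A" "card T = k + 1"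
              using obtain_subset_with_card_n[of "k + 1" A] \<open>k < i\<close> by (metis Suc_eq_plus1 Suc_leI)
            have "Q E T" using her A T by blast
            then have "E \<in> bad Q n (k + 1)" using T A that(1) unfolding bad_def by blast
            then show False using that by blast
          qed
          then show ?thesis by (simp add: cnt_def)
        qed
        have ceq: "cnt Q n E1 i = cnt Q n E2 i" if "i \<in> {1..n}" for i
        proof (cases "i \<le> k")
          case True
          then have "h C1 i = h C2 i" using eq by simp
          then show ?thesis using True that by (simp add: h_def E1_def E2_def)
        next
          case False
          then show ?thesis using zero E1 E2 by simp
        qed
        have "P n E1 = P n E2" unfolding Pdef using ceq by (intro arg_cong2[where f="(+)"] refl sum.cong) auto
        moreover have "P_unique P n E1" using C1 E1 by (auto simp: S1_def unique_classes_def)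
        ultimately have "graph_iso n E1 n E2" using E2 unfolding P_unique_def by metis
        then have "(E1, E2) \<in> isoR n" using E1 E2 by (simp add: isoR_def)
        then show "C1 = C2"
          using quotient_eq_iff[OF equiv_isoR, of C1 n C2 E1 E2] C1i C2i E1 E2
          by (simp add: iso_classes_eq)
      qed
    qed
    also have "\<dots> = (2 ^ n + 1) ^ k" by (simp add: card_PiE)
    finally show ?thesis .
  qed
  moreover have "card (unique_classes P n) \<le> card S1 + card S2"
    using card_mono[OF _ sub] card_Un_le[of S1 S2] fS1 fS2 by (meson finite_UnI le_trans)
  ultimately show ?thesis by linarith
qed


lemma bad_generic:
  assumes inX: "\<And>E A. E \<in> graphs n \<Longrightarrow> A \<subseteq> {0..<n} \<Longrightarrow> Q E A \<Longrightarrow> E \<in> X A"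
    and cardX: "\<And>A. A \<subseteq> {0..<n} \<Longrightarrow> card (X A) \<le> 2 ^ (card (pairs {0..<n}) - card (pairs A))"
    and subX: "\<And>A. X A \<subseteq> graphs n"
  shows "real (card (bad Q n j)) \<le> 2 ^ n * 2 ^ (n choose 2) / 2 ^ (j choose 2)"
proof (cases "j \<le> n")
  case False
  have "bad Q n j = {}"
  proof -
    have "card A \<le> n" if "A \<subseteq> {0..<n}" for A :: "nat set"
      using card_mono[OF _ that] by simp
    then show ?thesis using False unfolding bad_def by force
  qed
  then show ?thesis by simp
next
  case True
  define AA where "AA = {A. A \<subseteq> {0..<n} \<and> card A = j}"
  have finAA: "finite AA" unfolding AA_def by auto
  have cAA: "card AA = n choose j" unfolding AA_def using n_subsets[of "{0..<n}" j] by simp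
  have cp: "card (pairs A) = j choose 2" if "A \<in> AA" for A
    using that card_pairs[of A] finite_subset[of A "{0..<n}"] by (auto simp: AA_def)
  have jn: "j choose 2 \<le> n choose 2"
  proof -
    have "card (pairs {0..<j}) \<le> card (pairs {0..<n})"
      using True by (intro card_mono finite_pairs) (auto simp: pairs_def)
    then show ?thesis by (simp add: card_pairs)
  qed
  have "bad Q n j \<subseteq> \<Union> (X ` AA)" using inX unfolding bad_def AA_def by blast
  then have "card (bad Q n j) \<le> card (\<Union> (X ` AA))"
    using finAA subX finite_graphs by (intro card_mono) (auto intro: finite_subset[OF subX])
  also have "\<dots> \<le> (\<Sum>A\<in>AA. card (X A))" using finAA by (rule card_UN_le)
  also have "\<dots> \<le> (\<Sum>A\<in>AA. 2 ^ ((n choose 2) - (j choose 2)))"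
  proof (rule sum_mono)
    fix A assume A: "A \<in> AA"
    then have "A \<subseteq> {0..<n}" by (simp add: AA_def)
    then have "card (X A) \<le> 2 ^ (card (pairs {0..<n}) - card (pairs A))" by (rule cardX)
    then show "card (X A) \<le> 2 ^ ((n choose 2) - (j choose 2))" using cp[OF A] by (simp add: card_pairs)
  qed
  also have "\<dots> = (n choose j) * 2 ^ ((n choose 2) - (j choose 2))" using cAA by simp
  finally have le: "card (bad Q n j) \<le> (n choose j) * 2 ^ ((n choose 2) - (j choose 2))" .
  have "real (card (bad Q n j)) \<le> real (n choose j) * 2 ^ ((n choose 2) - (j choose 2))"
    using le by (metis of_nat_le_iff of_nat_mult of_nat_numeral of_nat_power)
  also have "\<dots> \<le> 2 ^ n * 2 ^ ((n choose 2) - (j choose 2))"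
    using binomial_le_pow2[of n j] by (intro mult_right_mono) (auto simp del: of_nat_le_iff simp: of_nat_le_iff[symmetric])
  also have "(2::real) ^ ((n choose 2) - (j choose 2)) = 2 ^ (n choose 2) / 2 ^ (j choose 2)"
    using jn by (simp add: power_diff)
  finally show ?thesis by simp
qed

lemma bad_indep: "real (card (bad is_indep n j)) \<le> 2 ^ n * 2 ^ (n choose 2) / 2 ^ (j choose 2)"
proof (rule bad_generic[where X = "\<lambda>A. {E \<in> graphs n. E \<inter> pairs A = {}}"])
  fix E A assume "E \<in> graphs n" "A \<subseteq> {0..<n}" "is_indep E A"
  then show "E \<in> {E \<in> graphs n. E \<inter> pairs A = {}}"
    by (auto simp: is_indep_def pairs_def card_2_iff)
next
  fix A :: "nat set" assume A: "A \<subseteq> {0..<n}"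
  have sub: "pairs A \<subseteq> pairs {0..<n}" using A by (auto simp: pairs_def)
  have "{E \<in> graphs n. E \<inter> pairs A = {}} = Pow (pairs {0..<n} - pairs A)"
    by (auto simp: graphs_eq)
  then show "card {E \<in> graphs n. E \<inter> pairs A = {}} \<le> 2 ^ (card (pairs {0..<n}) - card (pairs A))"
    using sub by (simp add: card_Pow finite_pairs card_Diff_subset finite_subset[OF sub])
qed auto

lemma bad_clique: "real (card (bad is_clique n j)) \<le> 2 ^ n * 2 ^ (n choose 2) / 2 ^ (j choose 2)"
proof (rule bad_generic[where X = "\<lambda>A. {E \<in> graphs n. pairs A \<subseteq> E}"])
  fix E A assume "E \<in> graphs n" "A \<subseteq> {0..<n}" "is_clique E A"
  then show "E \<in> {E \<in> graphs n. pairs A \<subseteq> E}"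
    by (auto simp: is_clique_def pairs_def card_2_iff)
next
  fix A :: "nat set" assume A: "A \<subseteq> {0..<n}"
  have sub: "pairs A \<subseteq> pairs {0..<n}" using A by (auto simp: pairs_def)
  have "{E \<in> graphs n. pairs A \<subseteq> E} \<subseteq> (\<lambda>Y. Y \<union> pairs A) ` Pow (pairs {0..<n} - pairs A)"
  proof
    fix E assume "E \<in> {E \<in> graphs n. pairs A \<subseteq> E}"
    then have "E = (E - pairs A) \<union> pairs A" "E - pairs A \<in> Pow (pairs {0..<n} - pairs A)"
      by (auto simp: graphs_eq)
    then show "E \<in> (\<lambda>Y. Y \<union> pairs A) ` Pow (pairs {0..<n} - pairs A)" by blast
  qed
  then have "card {E \<in> graphs n. pairs A \<subseteq> E} \<le> card ((\<lambda>Y. Y \<union> pairs A) ` Pow (pairs {0..<n} - pairs A))"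
    by (intro card_mono) (auto simp: finite_pairs)
  also have "\<dots> \<le> card (Pow (pairs {0..<n} - pairs A))" by (rule card_image_le) (auto simp: finite_pairs)
  also have "\<dots> = 2 ^ (card (pairs {0..<n}) - card (pairs A))"
    using sub by (simp add: card_Pow finite_pairs card_Diff_subset finite_subset[OF sub])
  finally show "card {E \<in> graphs n. pairs A \<subseteq> E} \<le> 2 ^ (card (pairs {0..<n}) - card (pairs A))" .
qed auto


definition gb :: "real \<Rightarrow> real" where
  "gb x = exp (x * ln x + ln 2 * ((x+1)*x/4 - x*(x-1)/2)) +
          exp (x * ln x + ln 2 * x - ln 2 * ((x/4)*(x/4-1)/2))"

lemma gb_lim: "(gb \<longlongrightarrow> 0) at_top"
  unfolding gb_def by real_asymp

lemma pow2_exp: "(2::real) ^ m = exp (ln 2 * real m)"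
proof -
  have "exp (real m * ln 2) = exp (ln 2) ^ m" by (rule exp_of_nat_mult)
  then show ?thesis by (simp add: mult.commute)
qed

lemma real_choose2: "real (m choose 2) = real m * (real m - 1) / 2"
  by (induction m) (simp_all add: numeral_2_eq_2 field_simps)

lemma fact_exp: assumes "n > 0" shows "fact n \<le> exp (real n * ln (real n))"
proof -
  have "(fact n :: real) \<le> real (n ^ n)" by (rule fact_le_power)
  also have "\<dots> = exp (ln (real n ^ n))" using assms by simp
  also have "\<dots> = exp (real n * ln (real n))" using assms by (simp add: ln_realpow)
  finally show ?thesis .
qed

lemma ratio_bound:
  fixes U I n k :: nat
  assumes U: "real U \<le> real ((2^n+1)^k) + 2^n * 2^(n choose 2) / 2^((k+1) choose 2)"
    and I: "2^(n choose 2) \<le> I * fact n"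
    and n4: "n \<ge> 4" and kdef: "k = n div 4"
  shows "real U / real I \<le> gb (real n)"
proof -
  define x where "x = real n"
  define F :: real where "F = fact n"
  define N :: real where "N = 2 ^ (n choose 2)"
  have Npos: "N > 0" by (simp add: N_def)
  have IF: "N \<le> real I * F" unfolding N_def F_def
    using I by (metis of_nat_fact of_nat_le_iff of_nat_mult of_nat_numeral of_nat_power)
  have Fpos: "F > 0" by (simp add: F_def)
  have Ipos: "real I > 0"
  proof (rule ccontr)
    assume "\<not> real I > 0"
    then have "real I = 0" by simp
    with IF Npos show False by simp
  qed
  have "real U / real I = real U * F / (real I * F)" using Fpos by simp
  also have "\<dots> \<le> real U * F / N"
    using IF Npos Fpos by (intro divide_left_mono) auto
  also have "\<dots> \<le> F * real ((2^n+1)^k) / N + F * 2^n / 2^((k+1) choose 2)"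
  proof -
    have "real U * F / N \<le> (real ((2^n+1)^k) + 2^n * N / 2^((k+1) choose 2)) * F / N"
      using U Fpos Npos by (intro divide_right_mono mult_right_mono) (auto simp: N_def)
    also have "\<dots> = F * real ((2^n+1)^k) / N + F * 2^n / 2^((k+1) choose 2)"
      using Npos by (simp add: field_simps)
    finally show ?thesis .
  qed
  also have "F * real ((2^n+1)^k) / N \<le> exp (x * ln x + ln 2 * ((x+1)*x/4 - x*(x-1)/2))"
  proof -
    have "real ((2^n+1)^k) \<le> (2::real) ^ ((n+1)*k)"
    proof -
      have "(2::real)^n + 1 \<le> 2^(n+1)" by simp
      then have "((2::real)^n + 1)^k \<le> (2^(n+1))^k" by (intro power_mono) auto
      then show ?thesis by (simp only: power_mult of_nat_power of_nat_add of_nat_numeral of_nat_1)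
    qed
    also have "\<dots> = exp (ln 2 * real ((n+1)*k))" by (rule pow2_exp)
    finally have A: "real ((2^n+1)^k) \<le> exp (ln 2 * real ((n+1)*k))" .
    have B: "N = exp (ln 2 * (x*(x-1)/2))" unfolding N_def x_def
      by (simp add: pow2_exp real_choose2)
    have C: "F \<le> exp (x * ln x)" unfolding F_def x_def using fact_exp n4 by simp
    have "F * real ((2^n+1)^k) / N \<le> exp (x * ln x) * exp (ln 2 * real ((n+1)*k)) / N"
      using A C Npos Fpos by (intro divide_right_mono mult_mono) auto
    also have "\<dots> = exp (x * ln x + ln 2 * (real ((n+1)*k) - x*(x-1)/2))"
      unfolding B by (simp add: exp_add exp_diff algebra_simps)
    also have "\<dots> \<le> exp (x * ln x + ln 2 * ((x+1)*x/4 - x*(x-1)/2))"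
    proof -
      have "4 * k \<le> n" using kdef by simp
      then have k4: "4 * real k \<le> x" unfolding x_def
        by (metis of_nat_le_iff of_nat_mult of_nat_numeral)
      have "real ((n+1)*k) = (x+1) * real k" by (simp add: x_def algebra_simps)
      also have "\<dots> \<le> (x+1) * (x/4)" using k4 by (intro mult_left_mono) (auto simp: x_def)
      finally have "real ((n+1)*k) \<le> (x+1)*x/4" by simp
      then show ?thesis by (simp add: mult_left_mono)
    qed
    finally show ?thesis .
  qed
  also have "F * 2^n / 2^((k+1) choose 2) \<le> exp (x * ln x + ln 2 * x - ln 2 * ((x/4)*(x/4-1)/2))"
  proof -
    have C: "F \<le> exp (x * ln x)" unfolding F_def x_def using fact_exp n4 by simp
    have "real ((k+1) choose 2) = (real k + 1) * real k / 2" by (simp add: real_choose2)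
    also have "\<dots> \<ge> (x/4)*(x/4-1)/2"
    proof -
      have "real k + 1 \<ge> x/4" "real k \<ge> x/4 - 1" "x/4 - 1 \<ge> 0"
        using kdef n4 unfolding x_def by linarith+
      then have "(x/4)*(x/4-1) \<le> (real k + 1) * real k"
        by (intro mult_mono) auto
      then show ?thesis by simp
    qed
    finally have D: "real ((k+1) choose 2) \<ge> (x/4)*(x/4-1)/2" .
    have "F * 2^n / 2^((k+1) choose 2) \<le> exp (x * ln x) * exp (ln 2 * x) / exp (ln 2 * real ((k+1) choose 2))"
      using C by (simp add: pow2_exp x_def divide_right_mono)
    also have "\<dots> = exp (x * ln x + ln 2 * x - ln 2 * real ((k+1) choose 2))"
      by (simp add: exp_add exp_diff)
    also have "\<dots> \<le> exp (x * ln x + ln 2 * x - ln 2 * ((x/4)*(x/4-1)/2))"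
      using D by (simp add: mult_left_mono)
    finally show ?thesis .
  qed
  finally show ?thesis unfolding gb_def x_def by simp
qed


lemma wd_generic:
  fixes P :: "nat \<Rightarrow> nat set set \<Rightarrow> int poly"
  assumes Pdef: "\<And>n E. P n E = 1 + (\<Sum>i\<in>{1..n}. monom (int (cnt Q n E i)) i)"
    and her: "\<And>E A B. Q E A \<Longrightarrow> B \<subseteq> A \<Longrightarrow> Q E B"
    and badb: "\<And>n j. real (card (bad Q n j)) \<le> 2 ^ n * 2 ^ (n choose 2) / 2 ^ (j choose 2)"
  shows "weakly_distinguishing P"
  unfolding weakly_distinguishing_def
proof (rule tendsto_sandwich[of "\<lambda>_. 0" _ sequentially "\<lambda>n. gb (real n)"])
  show "\<forall>\<^sub>F n in sequentially. 0 \<le> real (card (unique_classes P n)) / real (card (iso_classes n))"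
    by simp
  show "((\<lambda>_. 0::real) \<longlongrightarrow> 0) sequentially" by simp
  show "((\<lambda>n. gb (real n)) \<longlongrightarrow> 0) sequentially"
    by (rule filterlim_compose[OF gb_lim filterlim_real_sequentially])
  show "\<forall>\<^sub>F n in sequentially. real (card (unique_classes P n)) / real (card (iso_classes n)) \<le> gb (real n)"
    unfolding eventually_sequentially
  proof (intro exI allI impI)
    fix n :: nat assume n4: "4 \<le> n"
    define k where "k = n div 4"
    have U: "card (unique_classes P n) \<le> (2 ^ n + 1) ^ k + card (bad Q n (k + 1))"
      by (rule unique_bound[OF Pdef her])
    have "real (card (unique_classes P n)) \<le> real ((2 ^ n + 1) ^ k) + real (card (bad Q n (k + 1)))"
      using U by (metis of_nat_add of_nat_le_iff)
    also have "\<dots> \<le> real ((2 ^ n + 1) ^ k) + 2 ^ n * 2 ^ (n choose 2) / 2 ^ ((k + 1) choose 2)"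
      using badb by simp
    finally have U': "real (card (unique_classes P n)) \<le> real ((2 ^ n + 1) ^ k) + 2 ^ n * 2 ^ (n choose 2) / 2 ^ ((k + 1) choose 2)" .
    show "real (card (unique_classes P n)) / real (card (iso_classes n)) \<le> gb (real n)"
      by (rule ratio_bound[OF U' card_graphs_le n4 k_def])
  qed
qed

theorem theorem2:
  shows "weakly_distinguishing ind_poly \<and> weakly_distinguishing clique_poly"
proof
  show "weakly_distinguishing ind_poly"
    by (rule wd_generic[where Q = is_indep, OF _ _ bad_indep])
       (auto simp: ind_poly_def indep_count_def cnt_def is_indep_def)
  show "weakly_distinguishing clique_poly"
    by (rule wd_generic[where Q = is_clique, OF _ _ bad_clique])
       (auto simp: clique_poly_def clique_count_def cnt_def is_clique_def)
qed

end
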